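(* Let $M$ be a $po$-$\Gamma$-semigroup. The following are equivalent: (1) $M$ is completely regular. (2) $B(a)=B(a\Gamma a)=B(a\Gamma a\Gamma M\Gamma a\Gamma a)$ for every $a\in M$. (3) $B(a)=B(a\Gamma a)$ for every $a\in M$.
   Context: A $po$-$\Gamma$-semigroup is a triple $(M,\Gamma,\le)$ where $M,\Gamma$ are nonempty sets with a map $M\times\Gamma\times M\to M$, $(a,\gamma,b)\mapsto a\gamma b$, satisfying $(a\gamma b)\mu c=a\gamma(b\mu c)$ for all $a,b,c\in M$, $\gamma,\mu\in\Gamma$, and $\le$ is a partial order on $M$ such that $a\le b$ implies $a\gamma c\le b\gamma c$ and $c\gamma a\le c\gamma b$ for all $c\in M$, $\gamma\in\Gamma$. For $A,B\subseteq M$, $A\Gamma B=\{a\gamma b: a\in A,\gamma\in\Gamma,b\in B\}$ (with $a\Gamma B$ meaning $\{a\}\Gamma B$, etc.), and $(A]=\{t\in M: t\le a \text{ for some } a\in A\}$. $M$ is regular if $a\in(a\Gamma M\Gamma a]$ for all $a\in M$; left regular if $a\in(M\Gamma a\Gamma a]$ for all $a\in M$; right regular if $a\in(a\Gamma a\Gamma M]$ for all $a\in M$; completely regular if it is regular, left regular and right regular. A bi-ideal of $M$ is a nonempty subset $B\subseteq M$ such that $B\Gamma M\Gamma B\subseteq B$ and, whenever $a\in B$, $b\in M$ and $b\le a$, then $b\in B$. For a nonempty subset $A\subseteq M$, $B(A)$ denotes the bi-ideal of $M$ generated by $A$ (the smallest bi-ideal containing $A$), and $B(A)=(A\cup A\Gamma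 M\Gamma A]$; $B(a)$ means $B(\{a\})=(\{a\}\cup a\Gamma M\Gamma a]$. *)

theory Defs
  imports Main
begin

definition po_gamma_semigroup ::
  "'a set \<Rightarrow> 'g set \<Rightarrow> ('a \<Rightarrow> 'g \<Rightarrow> 'a \<Rightarrow> 'a) \<Rightarrow> ('a \<Rightarrow> 'a \<Rightarrow> bool) \<Rightarrow> bool" where
  "po_gamma_semigroup M G mult le \<longleftrightarrow>
     M \<noteq> {} \<and> G \<noteq> {} \<and>
     (\<forall>a\<in>M. \<forall>g\<in>G. \<forall>b\<in>M. mult a g b \<in> M) \<and>
     (\<forall>a\<in>M. \<forall>b\<in>M. \<forall>c\<in>M. \<forall>g\<in>G. \<forall>m\<in>G.
        mult (mult a g b) m c = mult a g (mult b m c)) \<and>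
     (\<forall>a\<in>M. le a a) \<and>
     (\<forall>a\<in>M. \<forall>b\<in>M. le a b \<and> le b a \<longrightarrow> a = b) \<and>
     (\<forall>a\<in>M. \<forall>b\<in>M. \<forall>c\<in>M. le a b \<and> le b c \<longrightarrow> le a c) \<and>
     (\<forall>a\<in>M. \<forall>b\<in>M. \<forall>c\<in>M. \<forall>g\<in>G. le a b \<longrightarrow>
        le (mult a g c) (mult b g c) \<and> le (mult c g a) (mult c g b))"

definition gprod ::
  "'g set \<Rightarrow> ('a \<Rightarrow> 'g \<Rightarrow> 'a \<Rightarrow> 'a) \<Rightarrow> 'a set \<Rightarrow> 'a set \<Rightarrow> 'a set" where
  "gprod G mult A B = {mult a g b | a g b. a \<in> A \<and> g \<in> G \<and> b \<in> B}"

definition down :: "'a set \<Rightarrow> ('a \<Rightarrow> 'a \<Rightarrow> bool) \<Rightarrow> 'a set \<Rightarrow> 'a set" where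
  "down M le A = {t \<in> M. \<exists>a\<in>A. le t a}"

definition regular where
  "regular M G mult le \<longleftrightarrow>
     (\<forall>a\<in>M. a \<in> down M le (gprod G mult (gprod G mult {a} M) {a}))"

definition left_regular where
  "left_regular M G mult le \<longleftrightarrow>
     (\<forall>a\<in>M. a \<in> down M le (gprod G mult (gprod G mult M {a}) {a}))"

definition right_regular where
  "right_regular M G mult le \<longleftrightarrow>
     (\<forall>a\<in>M. a \<in> down M le (gprod G mult (gprod G mult {a} {a}) M))"

definition completely_regular where
  "completely_regular M G mult le \<longleftrightarrow>
     regular M G mult le \<and> left_regular M G mult le \<and> right_regular M G mult le"

definition bi_ideal where
  "bi_ideal M G mult le B \<longleftrightarrow>
     B \<noteq> {} \<and> B \<subseteq> M \<and>
     gprod G mult (gprod G mult B M) B \<subseteq> B \<and>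
     (\<forall>a\<in>B. \<forall>b\<in>M. le b a \<longrightarrow> b \<in> B)"

definition bi_ideal_gen where
  "bi_ideal_gen M G mult le A = \<Inter>{B. bi_ideal M G mult le B \<and> A \<subseteq> B}"

end

theory Submission
  imports Defs
begin

lemma gprod_mem: "x \<in> gprod G mult A B \<longleftrightarrow> (\<exists>a g b. x = mult a g b \<and> a \<in> A \<and> g \<in> G \<and> b \<in> B)"
  unfolding gprod_def by blast

lemma down_mem: "x \<in> down M le A \<longleftrightarrow> x \<in> M \<and> (\<exists>a\<in>A. le x a)"
  unfolding down_def by blast

locale pgs =
  fixes M :: "'a set" and G :: "'g set" and mult :: "'a \<Rightarrow> 'g \<Rightarrow> 'a \<Rightarrow> 'a" and le
  assumes P: "po_gamma_semigroup M G mult le"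
begin

lemma ne: "M \<noteq> {}" "G \<noteq> {}" using P unfolding po_gamma_semigroup_def by auto
lemma cl[simp]: "a\<in>M \<Longrightarrow> g\<in>G \<Longrightarrow> b\<in>M \<Longrightarrow> mult a g b \<in> M"
  using P unfolding po_gamma_semigroup_def by auto
lemma assoc[simp]: "a\<in>M \<Longrightarrow> b\<in>M \<Longrightarrow> c\<in>M \<Longrightarrow> g\<in>G \<Longrightarrow> m\<in>G \<Longrightarrow>
   mult (mult a g b) m c = mult a g (mult b m c)"
  using P unfolding po_gamma_semigroup_def by auto
lemma trans: "le a b \<Longrightarrow> le b c \<Longrightarrow> a\<in>M \<Longrightarrow> b\<in>M \<Longrightarrow> c\<in>M \<Longrightarrow> le a c"
  using P unfolding po_gamma_semigroup_def by blast
lemma monoL: "le a b \<Longrightarrow> a\<in>M \<Longrightarrow> b\<in>M \<Longrightarrow> c\<in>M \<Longrightarrow> g\<in>G \<Longrightarrow> le (mult a g c) (mult b g c)"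
  using P unfolding po_gamma_semigroup_def by blast
lemma monoR: "le a b \<Longrightarrow> a\<in>M \<Longrightarrow> b\<in>M \<Longrightarrow> c\<in>M \<Longrightarrow> g\<in>G \<Longrightarrow> le (mult c g a) (mult c g b)"
  using P unfolding po_gamma_semigroup_def by blast

lemma mono2:
  assumes "le x1 u1" "le x2 u2" "x1\<in>M" "u1\<in>M" "x2\<in>M" "u2\<in>M" "m\<in>M" "g\<in>G" "g'\<in>G"
  shows "le (mult (mult x1 g m) g' x2) (mult (mult u1 g m) g' u2)"
proof -
  have "le (mult (mult x1 g m) g' x2) (mult (mult u1 g m) g' x2)"
    using assms by (intro monoL) auto
  moreover have "le (mult (mult u1 g m) g' x2) (mult (mult u1 g m) g' u2)"
    using assms by (intro monoR) auto
  ultimately show ?thesis by (rule trans) (use assms in simp_all)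
qed

abbreviation BG where "BG A \<equiv> bi_ideal_gen M G mult le A"
abbreviation bi where "bi B \<equiv> bi_ideal M G mult le B"

lemma bi_M: "bi M"
proof -
  have "gprod G mult (gprod G mult M M) M \<subseteq> M"
  proof
    fix x assume "x \<in> gprod G mult (gprod G mult M M) M"
    then obtain a1 g m g' a2 where x: "x = mult (mult a1 g m) g' a2" "a1 \<in> M" "a2 \<in> M"
      "m \<in> M" "g \<in> G" "g' \<in> G" by (auto simp: gprod_mem)
    then show "x \<in> M" by simp
  qed
  then show ?thesis using ne unfolding bi_ideal_def by blast
qed

lemma gen_sub: "A \<subseteq> BG A"
  unfolding bi_ideal_gen_def by blast

lemma gen_least: "bi B \<Longrightarrow> A \<subseteq> B \<Longrightarrow> BG A \<subseteq> B"
  unfolding bi_ideal_gen_def by blast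

lemma gen_mult: "bi B \<Longrightarrow> b1\<in>B \<Longrightarrow> b2\<in>B \<Longrightarrow> m\<in>M \<Longrightarrow> g\<in>G \<Longrightarrow> g'\<in>G \<Longrightarrow>
   mult (mult b1 g m) g' b2 \<in> B"
  unfolding bi_ideal_def gprod_def by blast

lemma gen_down: "bi B \<Longrightarrow> b\<in>B \<Longrightarrow> x\<in>M \<Longrightarrow> le x b \<Longrightarrow> x\<in>B"
  unfolding bi_ideal_def by blast

lemma gen_bi: assumes "A \<noteq> {}" "A \<subseteq> M" shows "bi (BG A)"
proof -
  let ?F = "{B. bi B \<and> A \<subseteq> B}"
  have MF: "M \<in> ?F" using bi_M assms by auto
  have sub: "BG A \<subseteq> M" using MF unfolding bi_ideal_gen_def by blast
  have "gprod G mult (gprod G mult (BG A) M) (BG A) \<subseteq> BG A"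
  proof
    fix x assume "x \<in> gprod G mult (gprod G mult (BG A) M) (BG A)"
    then obtain b1 g m g' b2 where x: "x = mult (mult b1 g m) g' b2" "b1 \<in> BG A" "b2 \<in> BG A"
      "m \<in> M" "g \<in> G" "g' \<in> G" by (auto simp: gprod_mem)
    show "x \<in> BG A" unfolding bi_ideal_gen_def
    proof
      fix B assume "B \<in> ?F"
      then have "bi B" "b1 \<in> B" "b2 \<in> B" using x unfolding bi_ideal_gen_def by auto
      then show "x \<in> B" using x gen_mult by auto
    qed
  qed
  moreover have "\<forall>a\<in>BG A. \<forall>b\<in>M. le b a \<longrightarrow> b \<in> BG A"
    unfolding bi_ideal_gen_def using gen_down by blast
  ultimately show ?thesis using assms gen_sub sub unfolding bi_ideal_def by blast
qed

definition D where "D A = down M le (A \<union> gprod G mult (gprod G mult A M) A)"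

lemma refl: "a \<in> M \<Longrightarrow> le a a"
  using P unfolding po_gamma_semigroup_def by blast

lemma in_AMA: "a1\<in>A \<Longrightarrow> a2\<in>A \<Longrightarrow> w\<in>M \<Longrightarrow> g\<in>G \<Longrightarrow> g'\<in>G \<Longrightarrow>
   mult (mult a1 g w) g' a2 \<in> gprod G mult (gprod G mult A M) A"
  unfolding gprod_mem by blast

lemma D_shape1: assumes "A \<subseteq> M" "u \<in> A \<union> gprod G mult (gprod G mult A M) A"
  shows "u \<in> A \<or> (\<exists>a g w. a \<in> A \<and> g \<in> G \<and> w \<in> M \<and> u = mult a g w)"
proof (cases "u \<in> A")
  case False
  then obtain a1 g m g' a2 where x: "u = mult (mult a1 g m) g' a2" "a1 \<in> A" "a2 \<in> A"
      "m \<in> M" "g \<in> G" "g' \<in> G" using assms(2) by (auto simp: gprod_mem)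
  then have "a1 \<in> M" "a2 \<in> M" using assms(1) by auto
  then have "u = mult a1 g (mult m g' a2)" "mult m g' a2 \<in> M" using x by simp_all
  then show ?thesis using x by blast
qed simp

lemma D_shape2: assumes "A \<subseteq> M" "u \<in> A \<union> gprod G mult (gprod G mult A M) A"
  shows "u \<in> A \<or> (\<exists>a g w. a \<in> A \<and> g \<in> G \<and> w \<in> M \<and> u = mult w g a)"
proof (cases "u \<in> A")
  case False
  then obtain a1 g m g' a2 where x: "u = mult (mult a1 g m) g' a2" "a1 \<in> A" "a2 \<in> A"
      "m \<in> M" "g \<in> G" "g' \<in> G" using assms(2) by (auto simp: gprod_mem)
  then have "a1 \<in> M" "a2 \<in> M" using assms(1) by auto
  then have "mult a1 g m \<in> M" using x by simp_all
  then show ?thesis using x by blast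
qed simp

lemma D_bi: assumes "A \<noteq> {}" "A \<subseteq> M" shows "bi (D A)"
proof -
  let ?S = "A \<union> gprod G mult (gprod G mult A M) A"
  have SM1: "gprod G mult (gprod G mult A M) A \<subseteq> M"
  proof
    fix x assume "x \<in> gprod G mult (gprod G mult A M) A"
    then obtain a1 g m g' a2 where x: "x = mult (mult a1 g m) g' a2" "a1 \<in> A" "a2 \<in> A"
      "m \<in> M" "g \<in> G" "g' \<in> G" by (auto simp: gprod_mem)
    then have "a1 \<in> M" "a2 \<in> M" using assms(2) by auto
    then show "x \<in> M" using x by simp
  qed
  have SM: "?S \<subseteq> M" using SM1 assms(2) by blast
  have AD: "A \<subseteq> D A"
  proof
    fix a assume a: "a \<in> A"
    then have "a \<in> M" using assms(2) by auto
    then show "a \<in> D A" unfolding D_def down_mem using a refl by blast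
  qed
  have AM: "\<And>a. a \<in> A \<Longrightarrow> a \<in> M" using assms(2) by auto
  have "gprod G mult (gprod G mult (D A) M) (D A) \<subseteq> D A"
  proof
    fix x assume "x \<in> gprod G mult (gprod G mult (D A) M) (D A)"
    then obtain y1 g m g' y2 where x: "x = mult (mult y1 g m) g' y2" "y1 \<in> D A" "y2 \<in> D A"
      "m \<in> M" "g \<in> G" "g' \<in> G" by (auto simp: gprod_mem)
    then obtain u1 u2 where u: "u1 \<in> ?S" "u2 \<in> ?S" "le y1 u1" "le y2 u2" "y1 \<in> M" "y2 \<in> M"
      unfolding D_def down_mem by blast
    have uM: "u1 \<in> M" "u2 \<in> M" using u SM by auto
    have le: "le x (mult (mult u1 g m) g' u2)" unfolding x(1)
      by (rule mono2) (use u uM x in simp_all)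
    have xM: "x \<in> M" using x u by simp
    have "mult (mult u1 g m) g' u2 \<in> gprod G mult (gprod G mult A M) A"
    proof -
      from D_shape1[OF assms(2) u(1)] D_shape2[OF assms(2) u(2)] show ?thesis
      proof (elim disjE exE conjE)
        assume "u1 \<in> A" "u2 \<in> A" then show ?thesis using x in_AMA by blast
      next
        fix a h w assume h: "u1 \<in> A" "a \<in> A" "h \<in> G" "w \<in> M" "u2 = mult w h a"
        have "mult (mult u1 g m) g' u2 = mult (mult u1 g (mult m g' w)) h a"
          using h x AM by simp
        moreover have "mult (mult u1 g (mult m g' w)) h a \<in> gprod G mult (gprod G mult A M) A"
          by (rule in_AMA) (use h x in simp_all)
        ultimately show ?thesis by simp
      next
        fix a h w assume h: "u2 \<in> A" "a \<in> A" "h \<in> G" "w \<in> M" "u1 = mult a h w"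
        have "mult (mult u1 g m) g' u2 = mult (mult a h (mult w g m)) g' u2"
          using h x AM by simp
        moreover have "mult (mult a h (mult w g m)) g' u2 \<in> gprod G mult (gprod G mult A M) A"
          by (rule in_AMA) (use h x in simp_all)
        ultimately show ?thesis by simp
      next
        fix a h w a' h' w' assume h: "a \<in> A" "h \<in> G" "w \<in> M" "u1 = mult a h w"
           "a' \<in> A" "h' \<in> G" "w' \<in> M" "u2 = mult w' h' a'"
        have "mult (mult u1 g m) g' u2 = mult (mult a h (mult (mult w g m) g' w')) h' a'"
          using h x AM by simp
        moreover have "mult (mult a h (mult (mult w g m) g' w')) h' a' \<in> gprod G mult (gprod G mult A M) A"
          by (rule in_AMA) (use h x in simp_all)
        ultimately show ?thesis by simp
      qed
    qed
    then show "x \<in> D A" using le xM unfolding D_def down_mem by blast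
  qed
  moreover have "\<forall>a\<in>D A. \<forall>b\<in>M. le b a \<longrightarrow> b \<in> D A"
  proof (intro ballI impI)
    fix a b assume a: "a \<in> D A" and b: "b \<in> M" and ba: "le b a"
    then obtain u where u: "u \<in> ?S" "le a u" "a \<in> M" unfolding D_def down_mem by blast
    have "le b u" by (rule trans[OF ba u(2) b u(3)]) (use u SM in blast)
    then show "b \<in> D A" unfolding D_def down_mem using u b by blast
  qed
  moreover have "D A \<subseteq> M" unfolding D_def down_def by blast
  ultimately show ?thesis using AD assms unfolding bi_ideal_def by blast
qed

lemma BG_D: assumes "A \<noteq> {}" "A \<subseteq> M" shows "BG A \<subseteq> D A"
proof -
  have "A \<subseteq> D A"
  proof
    fix a assume a: "a \<in> A"
    then have "a \<in> M" using assms(2) by auto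
    then show "a \<in> D A" unfolding D_def down_mem using a refl by blast
  qed
  then show ?thesis using gen_least[OF D_bi[OF assms]] by blast
qed

lemma aa_ne: assumes "a \<in> M" shows "gprod G mult {a} {a} \<noteq> {} \<and> gprod G mult {a} {a} \<subseteq> M"
proof -
  obtain g where g: "g \<in> G" using ne by blast
  then have "mult a g a \<in> gprod G mult {a} {a}" by (auto simp: gprod_mem)
  then have "gprod G mult {a} {a} \<noteq> {}" by blast
  moreover have "gprod G mult {a} {a} \<subseteq> M" using assms by (auto simp: gprod_mem)
  ultimately show ?thesis by blast
qed

lemma reg_intro: "a\<in>M \<Longrightarrow> g\<in>G \<Longrightarrow> g'\<in>G \<Longrightarrow> m\<in>M \<Longrightarrow> le a (mult (mult a g m) g' a) \<Longrightarrow>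
   a \<in> down M le (gprod G mult (gprod G mult {a} M) {a})"
proof -
  assume h: "a\<in>M" "g\<in>G" "g'\<in>G" "m\<in>M" "le a (mult (mult a g m) g' a)"
  have "mult (mult a g m) g' a \<in> gprod G mult (gprod G mult {a} M) {a}" unfolding gprod_mem using h by blast
  then show ?thesis unfolding down_mem using h by blast
qed
lemma left_intro: "a\<in>M \<Longrightarrow> g\<in>G \<Longrightarrow> g'\<in>G \<Longrightarrow> m\<in>M \<Longrightarrow> le a (mult (mult m g a) g' a) \<Longrightarrow>
   a \<in> down M le (gprod G mult (gprod G mult M {a}) {a})"
proof -
  assume h: "a\<in>M" "g\<in>G" "g'\<in>G" "m\<in>M" "le a (mult (mult m g a) g' a)"
  have "mult (mult m g a) g' a \<in> gprod G mult (gprod G mult M {a}) {a}" unfolding gprod_mem using h by blast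
  then show ?thesis unfolding down_mem using h by blast
qed
lemma right_intro: "a\<in>M \<Longrightarrow> g\<in>G \<Longrightarrow> g'\<in>G \<Longrightarrow> m\<in>M \<Longrightarrow> le a (mult (mult a g a) g' m) \<Longrightarrow>
   a \<in> down M le (gprod G mult (gprod G mult {a} {a}) M)"
proof -
  assume h: "a\<in>M" "g\<in>G" "g'\<in>G" "m\<in>M" "le a (mult (mult a g a) g' m)"
  have "mult (mult a g a) g' m \<in> gprod G mult (gprod G mult {a} {a}) M" unfolding gprod_mem using h by blast
  then show ?thesis unfolding down_mem using h by blast
qed

lemma P3_CR: assumes H: "\<forall>a\<in>M. BG {a} = BG (gprod G mult {a} {a})"
  shows "completely_regular M G mult le"
proof -
  have key: "a \<in> down M le (gprod G mult (gprod G mult {a} M) {a}) \<and>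
             a \<in> down M le (gprod G mult (gprod G mult M {a}) {a}) \<and>
             a \<in> down M le (gprod G mult (gprod G mult {a} {a}) M)" if aM: "a \<in> M" for a
  proof -
    let ?A = "gprod G mult {a} {a}"
    have "a \<in> BG {a}" using gen_sub by auto
    also have "\<dots> = BG ?A" using H aM by auto
    also have "\<dots> \<subseteq> D ?A" using BG_D aa_ne aM by auto
    finally obtain u where u: "le a u" "u \<in> ?A \<union> gprod G mult (gprod G mult ?A M) ?A"
      unfolding D_def down_def by blast
    from u(2) show ?thesis
    proof
      assume "u \<in> ?A"
      then obtain g where g: "g \<in> G" "u = mult a g a" by (auto simp: gprod_mem)
      have uM: "u \<in> M" using g aM by simp
      have "le (mult a g a) (mult u g a)" using u g aM uM by (intro monoL) auto
      then have "le u (mult u g a)" using g(2) by simp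
      then have "le a (mult u g a)" by (rule trans[OF u(1)]) (use uM g aM in simp_all)
      then have l: "le a (mult (mult a g a) g a)" using g(2) by simp
      show ?thesis using reg_intro[OF aM g(1) g(1) aM l] left_intro[OF aM g(1) g(1) aM l]
        right_intro[OF aM g(1) g(1) aM l] by blast
    next
      assume "u \<in> gprod G mult (gprod G mult ?A M) ?A"
      then obtain g m g' h h' where g: "g \<in> G" "g' \<in> G" "h \<in> G" "h' \<in> G" "m \<in> M"
         "u = mult (mult (mult a h a) g m) g' (mult a h' a)" by (auto simp: gprod_mem)
      have e1: "u = mult (mult a h (mult a g (mult m g' a))) h' a" using g aM by simp
      have e2: "u = mult (mult (mult (mult a h a) g m) g' a) h' a" using g aM by simp
      have e3: "u = mult (mult a h a) g (mult m g' (mult a h' a))" using g aM by simp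
      have "le a (mult (mult a h (mult a g (mult m g' a))) h' a)" by (simp only: e1[symmetric] u(1))
      then have c1: "a \<in> down M le (gprod G mult (gprod G mult {a} M) {a})"
        by (rule reg_intro[OF aM g(3) g(4), rotated]) (use aM g in simp)
      have "le a (mult (mult (mult (mult a h a) g m) g' a) h' a)" by (simp only: e2[symmetric] u(1))
      then have c2: "a \<in> down M le (gprod G mult (gprod G mult M {a}) {a})"
        by (rule left_intro[OF aM g(2) g(4), rotated]) (use aM g in simp)
      have "le a (mult (mult a h a) g (mult m g' (mult a h' a)))" by (simp only: e3[symmetric] u(1))
      then have c3: "a \<in> down M le (gprod G mult (gprod G mult {a} {a}) M)"
        by (rule right_intro[OF aM g(3) g(1), rotated]) (use aM g in simp)
      show ?thesis using c1 c2 c3 by blast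
    qed
  qed
  have r: "regular M G mult le" unfolding regular_def
  proof (intro ballI)
    fix a assume aM: "a \<in> M" show "a \<in> down M le (gprod G mult (gprod G mult {a} M) {a})"
      using key[OF aM] by blast
  qed
  have l: "left_regular M G mult le" unfolding left_regular_def
  proof (intro ballI)
    fix a assume aM: "a \<in> M" show "a \<in> down M le (gprod G mult (gprod G mult M {a}) {a})"
      using key[OF aM] by blast
  qed
  have rr: "right_regular M G mult le" unfolding right_regular_def
  proof (intro ballI)
    fix a assume aM: "a \<in> M" show "a \<in> down M le (gprod G mult (gprod G mult {a} {a}) M)"
      using key[OF aM] by blast
  qed
  show ?thesis unfolding completely_regular_def using r l rr by (intro conjI)
qed

lemma CR_P2: assumes CR: "completely_regular M G mult le" and aM: "a \<in> M"
  shows "BG {a} = BG (gprod G mult {a} {a}) \<and>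
         BG (gprod G mult {a} {a}) = BG (gprod G mult (gprod G mult (gprod G mult (gprod G mult {a} {a}) M) {a}) {a})"
proof -
  let ?A = "gprod G mult {a} {a}"
  let ?T = "gprod G mult (gprod G mult (gprod G mult ?A M) {a}) {a}"
  obtain g1 x1 g1' where r: "g1 \<in> G" "g1' \<in> G" "x1 \<in> M" "le a (mult (mult a g1 x1) g1' a)"
  proof -
    have "a \<in> down M le (gprod G mult (gprod G mult {a} M) {a})"
      using CR aM unfolding completely_regular_def regular_def by blast
    then show ?thesis using that by (auto simp: down_mem gprod_mem)
  qed
  obtain g2 y g2' where l: "g2 \<in> G" "g2' \<in> G" "y \<in> M" "le a (mult (mult y g2 a) g2' a)"
  proof -
    have "a \<in> down M le (gprod G mult (gprod G mult M {a}) {a})"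
      using CR aM unfolding completely_regular_def left_regular_def by blast
    then show ?thesis using that by (auto simp: down_mem gprod_mem)
  qed
  obtain g3 z g3' where rr: "g3 \<in> G" "g3' \<in> G" "z \<in> M" "le a (mult (mult a g3 a) g3' z)"
  proof -
    have "a \<in> down M le (gprod G mult (gprod G mult {a} {a}) M)"
      using CR aM unfolding completely_regular_def right_regular_def by blast
    then show ?thesis using that by (auto simp: down_mem gprod_mem)
  qed
  have Ane: "?A \<noteq> {}" "?A \<subseteq> M" using aa_ne aM by auto
  have Tsub: "?T \<subseteq> M" using aM by (auto simp: gprod_mem)
  have Tne: "?T \<noteq> {}"
  proof -
    obtain g where g: "g \<in> G" using ne by blast
    have "mult (mult (mult (mult a g a) g a) g a) g a \<in> ?T" unfolding gprod_mem using g aM by blast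
    then show ?thesis by blast
  qed
  have biA: "bi (BG ?A)" using gen_bi Ane by auto
  have bia: "bi (BG {a})" using gen_bi aM by auto
  have biT: "bi (BG ?T)" using gen_bi Tsub Tne by auto
  have aB: "a \<in> BG {a}" using gen_sub by blast
  have A_in: "?A \<subseteq> BG {a}"
  proof
    fix x assume "x \<in> ?A"
    then obtain g where g: "g \<in> G" "x = mult a g a" by (auto simp: gprod_mem)
    have "le x (mult (mult (mult a g1 x1) g1' a) g a)" unfolding g(2)
      by (rule monoL) (use g r aM in auto)
    moreover have "mult (mult (mult a g1 x1) g1' a) g a = mult (mult a g1 (mult x1 g1' a)) g a"
      using g r aM by simp
    moreover have "mult (mult a g1 (mult x1 g1' a)) g a \<in> BG {a}"
      by (rule gen_mult[OF bia aB aB]) (use g r aM in simp_all)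
    ultimately show "x \<in> BG {a}" using gen_down[OF bia] g aM by auto
  qed
  have T_in: "?T \<subseteq> BG ?A"
  proof
    fix x assume "x \<in> ?T"
    then obtain g m g' h h' where g: "g \<in> G" "g' \<in> G" "h \<in> G" "h' \<in> G" "m \<in> M"
       "x = mult (mult (mult (mult a h a) g m) g' a) h' a" by (auto simp: gprod_mem)
    have "x = mult (mult (mult a h a) g m) g' (mult a h' a)" using g aM by simp
    moreover have "mult a h a \<in> ?A" "mult a h' a \<in> ?A"
      unfolding gprod_mem using g by blast+
    then have "mult a h a \<in> BG ?A" "mult a h' a \<in> BG ?A" using gen_sub[of ?A] by blast+
    ultimately show "x \<in> BG ?A" using gen_mult[OF biA] g by simp
  qed
  let ?w = "mult (mult z g1 x1) g1' y"
  let ?t = "mult (mult (mult (mult a g3 a) g3' ?w) g2 a) g2' a"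
  have wM: "?w \<in> M" using rr r l aM by simp
  have tT: "?t \<in> ?T" unfolding gprod_mem using rr l aM wM by blast
  have L: "le (mult (mult a g1 x1) g1' a)
           (mult (mult (mult (mult a g3 a) g3' z) g1 x1) g1' (mult (mult y g2 a) g2' a))"
    by (rule mono2) (use rr l r aM in simp_all)
  have E: "mult (mult (mult (mult a g3 a) g3' z) g1 x1) g1' (mult (mult y g2 a) g2' a) = ?t"
    using rr l r aM by simp
  from L have L2: "le (mult (mult a g1 x1) g1' a) ?t" unfolding E .
  have "le a ?t" by (rule trans[OF r(4) L2]) (use rr l r aM wM in simp_all)
  then have aT: "a \<in> BG ?T" using gen_down[OF biT] gen_sub tT aM by auto
  have s1: "BG {a} \<subseteq> BG ?T" using gen_least[OF biT] aT by auto
  have s2: "BG ?T \<subseteq> BG ?A" using gen_least[OF biA] T_in by auto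
  have s3: "BG ?A \<subseteq> BG {a}" using gen_least[OF bia] A_in by auto
  show ?thesis using s1 s2 s3 by blast
qed

end

theorem proposition5:
  fixes M :: "'a set" and G :: "'g set"
    and mult :: "'a \<Rightarrow> 'g \<Rightarrow> 'a \<Rightarrow> 'a" and le :: "'a \<Rightarrow> 'a \<Rightarrow> bool"
  assumes "po_gamma_semigroup M G mult le"
  shows "(completely_regular M G mult le
            \<longleftrightarrow> (\<forall>a\<in>M. bi_ideal_gen M G mult le {a}
                          = bi_ideal_gen M G mult le (gprod G mult {a} {a})
                       \<and> bi_ideal_gen M G mult le (gprod G mult {a} {a})
                          = bi_ideal_gen M G mult le
                              (gprod G mult (gprod G mult (gprod G mult (gprod G mult {a} {a}) M) {a}) {a})))
       \<and> (completely_regular M G mult le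
            \<longleftrightarrow> (\<forall>a\<in>M. bi_ideal_gen M G mult le {a}
                          = bi_ideal_gen M G mult le (gprod G mult {a} {a})))"
proof -
  interpret pgs M G mult le using assms by unfold_locales
  show ?thesis using CR_P2 P3_CR by blast
qed

end
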